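(* There is an absolute constant $c>0$ such that for infinitely many $n$ there exist integers $b_1,\dots,b_n\ge 0$ with $b_1+\dots+b_n=n-1$ such that $(b_1,\dots,b_n)$-BG has an equilibrium graph in the MAX version with diameter at least $cn$.
   Context: Bounded budget network creation game $(b_1,\dots,b_n)$-BG: $n$ players with integer budgets $0\le b_i\le n-1$. A strategy of player $i$ is a set $S_i\subseteq\{1,\dots,n\}\setminus\{i\}$ with $|S_i|=b_i$; a profile is realized by the directed graph $G$ on $u_1,\dots,u_n$ with an arc $\overrightarrow{u_iu_j}$ iff $j\in S_i$. $U(G)$ is the undirected multigraph obtained by ignoring directions; $\operatorname{dist}(u,v)$ is the distance in $U(G)$, defined as $n^2$ between different components. MAX cost: $c_{MAX}(u)=\max_v\operatorname{dist}(u,v)+(\kappa-1)n^2$, $\kappa$ the number of components of $U(G)$. An equilibrium graph in the MAX version is a realization in which no vertex can decrease its MAX cost by changing its own strategy while the other strategies are fixed. The diameter is the maximum distance between two vertices. *)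

theory Defs
  imports Complex_Main
begin

text \<open>Vertices are 0..<n; a profile is S :: nat \<Rightarrow> nat set, S i being the strategy of player i.
  U(G) has an edge between u and v iff v \<in> S u or u \<in> S v.\<close>

definition adj :: "nat \<Rightarrow> (nat \<Rightarrow> nat set) \<Rightarrow> nat \<Rightarrow> nat \<Rightarrow> bool" where
  "adj n S u v \<longleftrightarrow> u < n \<and> v < n \<and> (v \<in> S u \<or> u \<in> S v)"

fun walk :: "nat \<Rightarrow> (nat \<Rightarrow> nat set) \<Rightarrow> nat \<Rightarrow> nat \<Rightarrow> nat \<Rightarrow> bool" where
  "walk n S 0 u v \<longleftrightarrow> u = v"
| "walk n S (Suc k) u v \<longleftrightarrow> (\<exists>w. walk n S k u w \<and> adj n S w v)"

definition connected_in :: "nat \<Rightarrow> (nat \<Rightarrow> nat set) \<Rightarrow> nat \<Rightarrow> nat \<Rightarrow> bool" where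
  "connected_in n S u v \<longleftrightarrow> (\<exists>k. walk n S k u v)"

definition gdist :: "nat \<Rightarrow> (nat \<Rightarrow> nat set) \<Rightarrow> nat \<Rightarrow> nat \<Rightarrow> nat" where
  "gdist n S u v = (if connected_in n S u v then (LEAST k. walk n S k u v) else n^2)"

definition num_components :: "nat \<Rightarrow> (nat \<Rightarrow> nat set) \<Rightarrow> nat" where
  "num_components n S = card ({0..<n} // {(u, v). u < n \<and> v < n \<and> connected_in n S u v})"

definition cost_max :: "nat \<Rightarrow> (nat \<Rightarrow> nat set) \<Rightarrow> nat \<Rightarrow> nat" where
  "cost_max n S u = Max {gdist n S u v | v. v < n} + (num_components n S - 1) * n^2"

definition strategy :: "nat \<Rightarrow> (nat \<Rightarrow> nat) \<Rightarrow> nat \<Rightarrow> nat set \<Rightarrow> bool" where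
  "strategy n b i T \<longleftrightarrow> T \<subseteq> {0..<n} - {i} \<and> card T = b i"

definition profile :: "nat \<Rightarrow> (nat \<Rightarrow> nat) \<Rightarrow> (nat \<Rightarrow> nat set) \<Rightarrow> bool" where
  "profile n b S \<longleftrightarrow> (\<forall>i<n. strategy n b i (S i))"

definition max_equilibrium :: "nat \<Rightarrow> (nat \<Rightarrow> nat) \<Rightarrow> (nat \<Rightarrow> nat set) \<Rightarrow> bool" where
  "max_equilibrium n b S \<longleftrightarrow> profile n b S \<and>
     (\<forall>i<n. \<forall>T. strategy n b i T \<longrightarrow> cost_max n S i \<le> cost_max n (S(i := T)) i)"

definition diameter :: "nat \<Rightarrow> (nat \<Rightarrow> nat set) \<Rightarrow> nat" where
  "diameter n S = Max {gdist n S u v | u v. u < n \<and> v < n}"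

end

theory Submission
  imports Defs
begin

lemma adj_sym: "adj n S u v = adj n S v u" by (auto simp: adj_def)

lemma walk_append: "walk n S a u w \<Longrightarrow> walk n S b w v \<Longrightarrow> walk n S (a+b) u v"
  by (induction b arbitrary: v) auto

lemma walk_Suc_left: "adj n S u w \<Longrightarrow> walk n S k w v \<Longrightarrow> walk n S (Suc k) u v"
proof -
  assume a: "adj n S u w" "walk n S k w v"
  have "walk n S 1 u w" using a(1) by simp
  from walk_append[OF this a(2)] show ?thesis by simp
qed

lemma walk_rev: "walk n S k u v \<Longrightarrow> walk n S k v u"
proof (induction k arbitrary: v)
  case 0 then show ?case by simp
next
  case (Suc k)
  then obtain w where w: "walk n S k u w" "adj n S w v" by auto
  have "walk n S k w u" using Suc.IH w(1) by blast
  moreover have "adj n S v w" using w(2) adj_sym by metis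
  ultimately show ?case using walk_Suc_left by blast
qed

lemma walk_pot: "(\<forall>x y. adj n S x y \<longrightarrow> f x \<le> f y + 1) \<Longrightarrow> walk n S k u v \<Longrightarrow> f u \<le> f v + k"
proof (induction k arbitrary: v)
  case 0 then show ?case by simp
next
  case (Suc k)
  then obtain w where w: "walk n S k u w" "adj n S w v" by auto
  have "f u \<le> f w + k" using Suc w by blast
  moreover have "f w \<le> f v + 1" using Suc.prems(1) w(2) by blast
  ultimately show ?case by simp
qed

lemma walk_closed: "(\<forall>x y. adj n S x y \<longrightarrow> x \<in> C \<longrightarrow> y \<in> C) \<Longrightarrow> walk n S k u v \<Longrightarrow> u \<in> C \<Longrightarrow> v \<in> C"
  by (induction k arbitrary: v) auto

lemma gdist_le: "walk n S k u v \<Longrightarrow> gdist n S u v \<le> k"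
  unfolding gdist_def connected_in_def by (auto intro: Least_le)

lemma gdist_ge: assumes "\<forall>x y. adj n S x y \<longrightarrow> f x \<le> f y + 1"
  shows "min (n^2) (f u - f v) \<le> gdist n S u v"
proof (cases "connected_in n S u v")
  case True
  then obtain m where "walk n S m u v" unfolding connected_in_def by blast
  hence "walk n S (LEAST m. walk n S m u v) u v" by (rule LeastI)
  from walk_pot[OF assms this] True show ?thesis unfolding gdist_def by simp
next
  case False then show ?thesis unfolding gdist_def by simp
qed

lemma gdist_disc: assumes "\<forall>x y. adj n S x y \<longrightarrow> x \<in> C \<longrightarrow> y \<in> C" "u \<in> C" "v \<notin> C"
  shows "gdist n S u v = n^2"
proof -
  have "\<not> connected_in n S u v" using walk_closed[OF assms(1) _ assms(2)] assms(3)
    unfolding connected_in_def by blast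
  then show ?thesis unfolding gdist_def by simp
qed

lemma cost_ge: "v < n \<Longrightarrow> gdist n S u v \<le> cost_max n S u"
proof -
  assume "v < n"
  have fin: "finite {gdist n S u v | v. v < n}" by simp
  have "gdist n S u v \<le> Max {gdist n S u v | v. v < n}"
    by (rule Max_ge[OF fin]) (use \<open>v < n\<close> in blast)
  then show ?thesis unfolding cost_max_def by simp
qed

lemma diam_ge: "u < n \<Longrightarrow> v < n \<Longrightarrow> gdist n S u v \<le> diameter n S"
proof -
  assume a: "u < n" "v < n"
  have fin: "finite {gdist n S u v | u v. u < n \<and> v < n}"
  proof -
    have "{gdist n S u v | u v. u < n \<and> v < n} = (\<lambda>(u,v). gdist n S u v) ` ({..<n} \<times> {..<n})"
      by auto
    then show ?thesis by simp
  qed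
  show ?thesis unfolding diameter_def by (rule Max_ge[OF fin]) (use a in blast)
qed

lemma ncomp1: assumes "0 < n" "\<forall>u<n. \<forall>v<n. connected_in n S u v"
  shows "num_components n S = 1"
proof -
  have R: "{(u, v). u < n \<and> v < n \<and> connected_in n S u v} = {0..<n} \<times> {0..<n}"
    using assms(2) by auto
  have "{0..<n} // ({0..<n} \<times> {0..<n}) = {{0..<n}}"
    unfolding quotient_def using assms(1) by auto
  then show ?thesis unfolding num_components_def R by simp
qed

lemma cost_le: assumes "0 < n" "num_components n S = 1" "\<forall>v<n. gdist n S u v \<le> B"
  shows "cost_max n S u \<le> B"
proof -
  have ne: "{gdist n S u v | v. v < n} \<noteq> {}" using assms(1) by auto
  have fin: "finite {gdist n S u v | v. v < n}" by simp
  have "Max {gdist n S u v | v. v < n} \<le> B" using Max_le_iff[OF fin ne] assms(3) by auto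
  then show ?thesis unfolding cost_max_def using assms(2) by simp
qed

definition dp :: "nat \<Rightarrow> nat" where "dp x = (x + 2) div 3"
definition legeq :: "nat \<Rightarrow> nat \<Rightarrow> bool" where
  "legeq x y \<longleftrightarrow> 1 \<le> x \<and> 1 \<le> y \<and> x mod 3 = y mod 3"
definition td :: "nat \<Rightarrow> nat \<Rightarrow> nat" where
  "td x y = (if legeq x y then (if dp x \<le> dp y then dp y - dp x else dp x - dp y) else dp x + dp y)"
definition tS :: "nat \<Rightarrow> nat \<Rightarrow> nat set" where
  "tS k x = (if x = 0 then {} else if x \<le> 3 then {0, x+3} else if x \<le> 3*k-3 then {x+3} else {})"

lemma dp3: "dp (x+3) = dp x + 1" by (simp add: dp_def)
lemma dp_le: "x < 3*k+1 \<Longrightarrow> dp x \<le> k" by (simp add: dp_def)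
lemma dp_small: "1 \<le> x \<Longrightarrow> x \<le> 3 \<Longrightarrow> dp x = 1" by (simp add: dp_def)
lemma dp_pos: "1 \<le> x \<Longrightarrow> 1 \<le> dp x" by (simp add: dp_def)
lemma legeq3: "1 \<le> x \<Longrightarrow> legeq (x+3) v = legeq x v" by (auto simp: legeq_def)

lemma tS_cases: "2 \<le> k \<Longrightarrow> y \<in> tS k x \<Longrightarrow> (y = 0 \<and> 1 \<le> x \<and> x \<le> 3) \<or> (y = x+3 \<and> 1 \<le> x \<and> x \<le> 3*k-3)"
  by (auto simp: tS_def split: if_splits)

lemma td_self: "td v v = 0" by (simp add: td_def legeq_def dp_def)

lemma td_lip: assumes "2 \<le> k" "y \<in> tS k x" shows "td y v \<le> td x v + 1 \<and> td x v \<le> td y v + 1"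
  using tS_cases[OF assms]
proof
  assume h: "y = 0 \<and> 1 \<le> x \<and> x \<le> 3"
  have "dp x = 1" using h dp_small by auto
  moreover have "legeq x v \<Longrightarrow> 1 \<le> dp v" using dp_pos by (auto simp: legeq_def)
  ultimately show ?thesis using h by (auto simp: td_def legeq_def dp_def)
next
  assume h: "y = x + 3 \<and> 1 \<le> x \<and> x \<le> 3 * k - 3"
  then show ?thesis using dp3[of x] legeq3[of x v] by (auto simp: td_def)
qed

lemma tS_sub: "2 \<le> k \<Longrightarrow> x < 3*k+1 \<Longrightarrow> tS k x \<subseteq> {0..<3*k+1} - {x}"
  by (auto simp: tS_def)

lemma card_tS: "2 \<le> k \<Longrightarrow> card (tS k x) = (if x = 0 then 0 else if x \<le> 3 then 2 else if x \<le> 3*k-3 then 1 else 0)"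
  by (auto simp: tS_def)

lemma adj_S: "adj (3*k+1) (tS k) x y \<Longrightarrow> 2 \<le> k \<Longrightarrow> td x v \<le> td y v + 1"
  unfolding adj_def using td_lip by blast

lemma walk_root: "2 \<le> k \<Longrightarrow> x < 3*k+1 \<Longrightarrow> walk (3*k+1) (tS k) (dp x) 0 x"
proof (induction x rule: less_induct)
  case (less x)
  show ?case
  proof (cases "x = 0")
    case True then show ?thesis by (simp add: dp_def)
  next
    case False
    show ?thesis
    proof (cases "x \<le> 3")
      case True
      have "adj (3*k+1) (tS k) 0 x" using True False less.prems
        by (auto simp: adj_def tS_def)
      then show ?thesis using dp_small[of x] True False by simp
    next
      case F2: False
      define z where "z = x - 3"
      have xz: "x = z + 3" "z < x" "1 \<le> z" using F2 z_def by auto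
      have "walk (3*k+1) (tS k) (dp z) 0 z" using less.IH[OF xz(2)] less.prems xz by simp
      moreover have "adj (3*k+1) (tS k) z x" using xz less.prems
        by (auto simp: adj_def tS_def)
      ultimately show ?thesis using dp3[of z] xz by auto
    qed
  qed
qed

lemma S_conn: assumes "2 \<le> k" "u < 3*k+1" "v < 3*k+1"
  shows "walk (3*k+1) (tS k) (dp u + dp v) u v"
  using walk_append[OF walk_rev[OF walk_root[OF assms(1,2)]] walk_root[OF assms(1,3)]] .

lemma S_ncomp: "2 \<le> k \<Longrightarrow> num_components (3*k+1) (tS k) = 1"
proof -
  assume k: "2 \<le> k"
  show ?thesis
    by (rule ncomp1) (use k S_conn[OF k] in \<open>auto simp: connected_in_def\<close>)
qed

lemma S_cost: assumes "2 \<le> k" "u < 3*k+1" shows "cost_max (3*k+1) (tS k) u \<le> dp u + k"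
proof (rule cost_le)
  show "\<forall>v<3*k+1. gdist (3*k+1) (tS k) u v \<le> dp u + k"
  proof (intro allI impI)
    fix v assume "v < 3*k+1"
    then have "gdist (3*k+1) (tS k) u v \<le> dp u + dp v" using gdist_le S_conn assms by blast
    then show "gdist (3*k+1) (tS k) u v \<le> dp u + k" using dp_le[OF \<open>v < 3*k+1\<close>] by simp
  qed
qed (use S_ncomp assms in auto)

lemma adj_upd: "adj n (S(i:=T)) x y \<longleftrightarrow> x<n \<and> y<n \<and> ((x \<noteq> i \<and> y \<in> S x) \<or> (x = i \<and> y \<in> T) \<or> (y \<noteq> i \<and> x \<in> S y) \<or> (y = i \<and> x \<in> T))"
  by (auto simp: adj_def)


lemma same_res: "y mod 3 = i mod 3 \<Longrightarrow> i < (y::nat) \<Longrightarrow> i + 3 \<le> y"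
proof -
  assume a: "y mod 3 = i mod 3" "i < y"
  then have "3 dvd (y - i)" using mod_eq_dvd_iff_nat[of i y 3] by auto
  moreover have "0 < y - i" using a by simp
  ultimately have "3 \<le> y - i" by (simp add: dvd_imp_le)
  then show ?thesis by simp
qed
lemma same_res2: "y mod 3 = i mod 3 \<Longrightarrow> i < (y::nat) + 3 \<Longrightarrow> i \<le> y"
  using same_res[of i y] by (cases "y < i") auto
lemma same_res3: "y mod 3 = i mod 3 \<Longrightarrow> y \<noteq> i \<Longrightarrow> 1 \<le> (y::nat) \<Longrightarrow> i \<le> 3 \<Longrightarrow> i < y"
  using same_res[of i y] by (cases "y < i") auto
lemma mod3a: "(3*m+1) mod 3 = (1::nat)" by simp
lemma mod3b: "(3*m+2) mod 3 = (2::nat)"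
proof -
  have "(3*m+2) mod 3 = (2 + m*3) mod 3" by (simp add: ac_simps)
  also have "\<dots> = 2" by (simp only: mod_mult_self1) simp
  finally show ?thesis .
qed

lemma S_edge_P2: assumes k: "2 \<le> k" and z: "z \<in> tS k x" and x: "x \<noteq> i" "x < 3*k+1" and i: "1 \<le> i"
  shows "(legeq x i \<and> i < x \<and> x < 3*k+1) \<longleftrightarrow> (legeq z i \<and> i < z \<and> z < 3*k+1)"
  using tS_cases[OF k z]
proof
  assume h: "z = 0 \<and> 1 \<le> x \<and> x \<le> 3"
  then show ?thesis using same_res[of x i] by (auto simp: legeq_def)
next
  assume h: "z = x + 3 \<and> 1 \<le> x \<and> x \<le> 3 * k - 3"
  then show ?thesis using same_res2[of x i] x by (auto simp: legeq_def)
qed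


lemma choose_v: "2 \<le> (k::nat) \<Longrightarrow> \<exists>v. 3*k-2 \<le> v \<and> v < 3*k+1 \<and> v mod 3 \<noteq> a mod 3 \<and> v mod 3 \<noteq> b mod 3"
proof -
  assume k: "2 \<le> k"
  have e1: "3*k-2 = 3*(k-1)+1" "3*k-1 = 3*(k-1)+2" using k by auto
  have m: "(3*k-2) mod 3 = 1" "(3*k-1) mod 3 = 2" "(3*k) mod 3 = 0" unfolding e1 using mod3a mod3b by simp_all
  have "a mod 3 = 0 \<or> a mod 3 = 1 \<or> a mod 3 = 2" "b mod 3 = 0 \<or> b mod 3 = 1 \<or> b mod 3 = 2" by arith+
  then consider "a mod 3 \<noteq> 1 \<and> b mod 3 \<noteq> 1" | "a mod 3 \<noteq> 2 \<and> b mod 3 \<noteq> 2" | "a mod 3 \<noteq> 0 \<and> b mod 3 \<noteq> 0"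
    by auto
  then show ?thesis
  proof cases
    case 1 then show ?thesis using m k by (intro exI[of _ "3*k-2"]) auto
  next
    case 2 then show ?thesis using m k by (intro exI[of _ "3*k-1"]) auto
  next
    case 3 then show ?thesis using m k by (intro exI[of _ "3*k"]) auto
  qed
qed

lemma dp_leaf: "3*k-2 \<le> v \<Longrightarrow> v < 3*k+1 \<Longrightarrow> 2 \<le> k \<Longrightarrow> dp v = k"
  unfolding dp_def by linarith

lemma dev_A: assumes k: "2 \<le> k" and i: "4 \<le> i" "i \<le> 3*k-3"
  and T: "T \<subseteq> {0..<3*k+1} - {i}" "card T = card (tS k i)"
  shows "\<exists>v<3*k+1. dp i + k \<le> gdist (3*k+1) ((tS k)(i := T)) i v"
proof -
  define n where "n = 3*k+1"
  define p where "p = (\<lambda>y. legeq y i \<and> i < y \<and> y < n)"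
  have "card T = 1" using T(2) card_tS[OF k] i by simp
  then obtain t where t: "T = {t}" by (rule card_1_singletonE)
  have tn: "t < n" "t \<noteq> i" using T(1) t n_def by auto
  have dpi: "dp i + k \<le> n^2"
  proof -
    have "dp i \<le> k" using dp_le[of i k] i by simp
    moreover have "n \<le> n^2" by (simp add: power2_eq_square)
    ultimately show ?thesis using n_def by linarith
  qed
  show ?thesis
  proof (cases "p t")
    case False
    define C where "C = {y. \<not> p y}"
    have cl: "\<forall>x y. adj n ((tS k)(i := T)) x y \<longrightarrow> x \<in> C \<longrightarrow> y \<in> C"
    proof (intro allI impI)
      fix x y assume a: "adj n ((tS k)(i := T)) x y" "x \<in> C"
      then have xy: "x < n" "y < n" by (auto simp: adj_upd)
      from a(1) consider "x \<noteq> i \<and> y \<in> tS k x" | "x = i \<and> y \<in> T" | "y \<noteq> i \<and> x \<in> tS k y" | "y = i \<and> x \<in> T"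
        unfolding adj_upd by blast
      then show "y \<in> C"
      proof cases
        case 1 then show ?thesis using S_edge_P2[OF k, of y x i] a(2) xy i unfolding C_def p_def n_def by auto
      next
        case 2 then show ?thesis using False t unfolding C_def by auto
      next
        case 3 then show ?thesis using S_edge_P2[OF k, of x y i] a(2) xy i unfolding C_def p_def n_def by auto
      next
        case 4 then show ?thesis unfolding C_def p_def by auto
      qed
    qed
    have "p (i+3)" using i k unfolding p_def legeq_def n_def by auto
    then have "gdist n ((tS k)(i := T)) i (i+3) = n^2"
      by (intro gdist_disc[OF cl]) (auto simp: C_def p_def)
    moreover have "i+3 < n" using i n_def by simp
    ultimately show ?thesis unfolding n_def[symmetric] using dpi by (intro exI[of _ "i+3"]) simp
  next
    case True
    obtain v where v: "3*k-2 \<le> v" "v < 3*k+1" "v mod 3 \<noteq> i mod 3" "v mod 3 \<noteq> i mod 3"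
      using choose_v[OF k] by blast
    have nl: "\<not> legeq v i" "\<not> legeq i v" using v by (auto simp: legeq_def)
    have dpv: "dp v = k" using dp_leaf v k by blast
    define f where "f = (\<lambda>x. if p x then dp i + k + 1 else td x v)"
    have fi: "f i = dp i + k" unfolding f_def p_def td_def using nl dpv by auto
    have fv: "f v = 0" unfolding f_def p_def using nl td_self by auto
    have E1: "f x \<le> f y + 1 \<and> f y \<le> f x + 1" if "x < n" "x \<noteq> i" "y \<in> tS k x" for x y
    proof -
      have "p x \<longleftrightarrow> p y" using S_edge_P2[OF k that(3) that(2)] that(1) i unfolding p_def n_def by auto
      then show ?thesis using td_lip[OF k that(3), of v] unfolding f_def by auto
    qed
    have E2: "f i \<le> f y + 1 \<and> f y \<le> f i + 1" if "y \<in> T" for y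
      using that t True fi unfolding f_def by auto
    have pot: "\<forall>x y. adj n ((tS k)(i := T)) x y \<longrightarrow> f x \<le> f y + 1"
    proof (intro allI impI)
      fix x y assume a: "adj n ((tS k)(i := T)) x y"
      then have xy: "x < n" "y < n" by (auto simp: adj_upd)
      from a consider "x \<noteq> i \<and> y \<in> tS k x" | "x = i \<and> y \<in> T" | "y \<noteq> i \<and> x \<in> tS k y" | "y = i \<and> x \<in> T"
        unfolding adj_upd by blast
      then show "f x \<le> f y + 1"
      proof cases
        case 1 then show ?thesis using E1[OF xy(1)] by blast
      next
        case 2 then show ?thesis using E2[of y] by blast
      next
        case 3 then show ?thesis using E1[OF xy(2)] by blast
      next
        case 4 then show ?thesis using E2[of x] by blast
      qed
    qed
    have "min (n^2) (f i - f v) \<le> gdist n ((tS k)(i := T)) i v" by (rule gdist_ge[OF pot])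
    moreover have "v < n" using v n_def by simp
    ultimately show ?thesis unfolding n_def[symmetric] using fi fv dpi by (intro exI[of _ v]) simp
  qed
qed



lemma small_ne: "1 \<le> i \<Longrightarrow> i \<le> 3 \<Longrightarrow> 2 \<le> k \<Longrightarrow> y \<in> tS k x \<Longrightarrow> y \<noteq> i"
  using tS_cases[of k y x] by auto

lemma dev_B: assumes k: "2 \<le> k" and i: "1 \<le> i" "i \<le> 3"
  and T: "T \<subseteq> {0..<3*k+1} - {i}" "card T = card (tS k i)"
  shows "\<exists>v<3*k+1. dp i + k \<le> gdist (3*k+1) ((tS k)(i := T)) i v"
proof -
  define n where "n = 3*k+1"
  define p where "p = (\<lambda>y. legeq y i \<and> i < y \<and> y < n)"
  define q where "q = (\<lambda>y. y < n \<and> \<not> legeq y i)"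
  have cT: "card T = 2" using T(2) card_tS[OF k] i by simp
  have finT: "finite T" using T(1) finite_subset by blast
  have dpi: "dp i = 1" using dp_small i by blast
  have n2: "k + 1 \<le> n^2"
  proof -
    have "n \<le> n^2" by (simp add: power2_eq_square)
    then show ?thesis using n_def by linarith
  qed
  have pq: "p y \<or> q y" if "y < n" "y \<noteq> i" for y
    using that i same_res3[of y i] unfolding p_def q_def legeq_def by auto
  have Tpq: "p t \<or> q t" if "t \<in> T" for t
  proof -
    have "t < n" "t \<noteq> i" using T(1) that n_def by auto
    then show ?thesis using pq by blast
  qed
  show ?thesis
  proof (cases "\<exists>t\<in>T. q t")
    case False
    define C where "C = {y. \<not> q y}"
    have cl: "\<forall>x y. adj n ((tS k)(i := T)) x y \<longrightarrow> x \<in> C \<longrightarrow> y \<in> C"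
    proof (intro allI impI)
      fix x y assume a: "adj n ((tS k)(i := T)) x y" "x \<in> C"
      then have xy: "x < n" "y < n" by (auto simp: adj_upd)
      from a(1) consider "x \<noteq> i \<and> y \<in> tS k x" | "x = i \<and> y \<in> T" | "y \<noteq> i \<and> x \<in> tS k y" | "y = i \<and> x \<in> T"
        unfolding adj_upd by blast
      then show "y \<in> C"
      proof cases
        case 1
        have lx: "legeq x i" using a(2) xy unfolding C_def q_def by auto
        have yx: "y \<in> tS k x" using 1 by simp
        from tS_cases[OF k yx] show ?thesis
        proof
          assume h: "y = 0 \<and> 1 \<le> x \<and> x \<le> 3"
          have "x mod 3 = i mod 3" using lx by (simp add: legeq_def)
          then show ?thesis using same_res3[of x i] same_res3[of i x] h 1 i by auto
        next
          assume "y = x + 3 \<and> 1 \<le> x \<and> x \<le> 3 * k - 3" then show ?thesis using lx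
            by (auto simp: legeq_def C_def q_def)
        qed
      next
        case 2 then show ?thesis using False unfolding C_def by auto
      next
        case 3
        have lx: "legeq x i" using a(2) xy unfolding C_def q_def by auto
        have yx: "x \<in> tS k y" using 3 by simp
        from tS_cases[OF k yx] show ?thesis
        proof
          assume "x = 0 \<and> 1 \<le> y \<and> y \<le> 3" then show ?thesis using lx by (auto simp: legeq_def)
        next
          assume "x = y + 3 \<and> 1 \<le> y \<and> y \<le> 3 * k - 3" then show ?thesis using lx
            by (auto simp: legeq_def C_def q_def)
        qed
      next
        case 4 then show ?thesis using i unfolding C_def q_def legeq_def by auto
      qed
    qed
    have "gdist n ((tS k)(i := T)) i 0 = n^2"
      by (intro gdist_disc[OF cl]) (use i in \<open>auto simp: C_def q_def legeq_def n_def\<close>)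
    moreover have "0 < n" using n_def by simp
    ultimately show ?thesis unfolding n_def[symmetric] using n2 dpi by (intro exI[of _ 0]) simp
  next
    case True
    then obtain t1 where t1: "t1 \<in> T" "q t1" by blast
    show ?thesis
    proof (cases "\<exists>t\<in>T. p t")
      case False
      define C where "C = {y. \<not> p y}"
      have cl: "\<forall>x y. adj n ((tS k)(i := T)) x y \<longrightarrow> x \<in> C \<longrightarrow> y \<in> C"
      proof (intro allI impI)
        fix x y assume a: "adj n ((tS k)(i := T)) x y" "x \<in> C"
        then have xy: "x < n" "y < n" by (auto simp: adj_upd)
        from a(1) consider "x \<noteq> i \<and> y \<in> tS k x" | "x = i \<and> y \<in> T" | "y \<noteq> i \<and> x \<in> tS k y" | "y = i \<and> x \<in> T"
          unfolding adj_upd by blast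
        then show "y \<in> C"
        proof cases
          case 1 then show ?thesis using S_edge_P2[OF k, of y x i] a(2) xy i unfolding C_def p_def n_def by auto
        next
          case 2 then show ?thesis using False unfolding C_def by auto
        next
          case 3 then show ?thesis using S_edge_P2[OF k, of x y i] a(2) xy i unfolding C_def p_def n_def by auto
        next
          case 4 then show ?thesis unfolding C_def p_def by auto
        qed
      qed
      have "p (i+3)" using i k unfolding p_def legeq_def n_def by auto
      then have "gdist n ((tS k)(i := T)) i (i+3) = n^2"
        by (intro gdist_disc[OF cl]) (auto simp: C_def p_def)
      moreover have "i+3 < n" using i k n_def by simp
      ultimately show ?thesis unfolding n_def[symmetric] using n2 dpi by (intro exI[of _ "i+3"]) simp
    next
      case True
      then obtain t2 where t2: "t2 \<in> T" "p t2" by blast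
      have ne: "t1 \<noteq> t2" using t1 t2 unfolding p_def q_def by auto
      have Teq: "T = {t1, t2}"
      proof -
        have "{t1, t2} \<subseteq> T" using t1 t2 by auto
        moreover have "card {t1, t2} = card T" using ne cT by simp
        ultimately show ?thesis using card_subset_eq[OF finT] by blast
      qed
      obtain v where v: "3*k-2 \<le> v" "v < 3*k+1" "v mod 3 \<noteq> i mod 3" "v mod 3 \<noteq> t1 mod 3"
        using choose_v[OF k] by blast
      have dpv: "dp v = k" using dp_leaf v k by blast
      have nl: "\<not> legeq v i" using v by (auto simp: legeq_def)
      have nl1: "\<not> legeq t1 v" using v by (auto simp: legeq_def)
      have vi: "v \<noteq> i" using v k i by auto
      define f where "f = (\<lambda>x. if x = i then k+1 else if p x then k+2 else min (td x v) (k+2))"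
      have fi: "f i = k + 1" unfolding f_def by simp
      have fv: "f v = 0" unfolding f_def p_def using nl vi td_self by auto
      have E1: "f x \<le> f y + 1 \<and> f y \<le> f x + 1" if "x < n" "x \<noteq> i" "y \<in> tS k x" for x y
      proof -
        have yi: "y \<noteq> i" using small_ne[OF i k that(3)] .
        have "p x \<longleftrightarrow> p y" using S_edge_P2[OF k that(3) that(2)] that(1) i unfolding p_def n_def by auto
        then show ?thesis using td_lip[OF k that(3), of v] yi that(2) unfolding f_def by (auto simp: min_def)
      qed
      have ft1: "k \<le> td t1 v" using nl1 dpv unfolding td_def by auto
      have t1i: "t1 \<noteq> i" "\<not> p t1" using t1 i unfolding q_def p_def legeq_def by auto
      have t2i: "t2 \<noteq> i" using t2 unfolding p_def by auto
      have E2: "f i \<le> f y + 1 \<and> f y \<le> f i + 1" if "y \<in> T" for y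
      proof -
        have "y = t1 \<or> y = t2" using that Teq by auto
        then show ?thesis
        proof
          assume "y = t1" then show ?thesis using ft1 t1i unfolding f_def by (auto simp: min_def)
        next
          assume "y = t2" then show ?thesis using t2 t2i unfolding f_def by auto
        qed
      qed
      have pot: "\<forall>x y. adj n ((tS k)(i := T)) x y \<longrightarrow> f x \<le> f y + 1"
      proof (intro allI impI)
        fix x y assume a: "adj n ((tS k)(i := T)) x y"
        then have xy: "x < n" "y < n" by (auto simp: adj_upd)
        from a consider "x \<noteq> i \<and> y \<in> tS k x" | "x = i \<and> y \<in> T" | "y \<noteq> i \<and> x \<in> tS k y" | "y = i \<and> x \<in> T"
          unfolding adj_upd by blast
        then show "f x \<le> f y + 1"
        proof cases
          case 1 then show ?thesis using E1[OF xy(1)] by blast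
        next
          case 2 then show ?thesis using E2[of y] by blast
        next
          case 3 then show ?thesis using E1[OF xy(2)] by blast
        next
          case 4 then show ?thesis using E2[of x] by blast
        qed
      qed
      have "min (n^2) (f i - f v) \<le> gdist n ((tS k)(i := T)) i v" by (rule gdist_ge[OF pot])
      moreover have "v < n" using v n_def by simp
      ultimately show ?thesis unfolding n_def[symmetric] using fi fv n2 dpi by (intro exI[of _ v]) simp
    qed
  qed
qed

lemma sum_tS: assumes k: "2 \<le> k" shows "(\<Sum>i<3*k+1. card (tS k i)) = 3*k"
proof -
  define g where "g = (\<lambda>i::nat. if i = 0 then 0 else if i \<le> 3 then 2 else if i \<le> 3*k-3 then (1::nat) else 0)"
  have "(\<Sum>i<3*k+1. card (tS k i)) = (\<Sum>i<3*k+1. g i)"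
    using card_tS[OF k] unfolding g_def by simp
  also have "\<dots> = sum g {0..<3*k+1}" by (simp add: atLeast0LessThan)
  also have "\<dots> = sum g {0..<4} + sum g {4..<3*k-2} + sum g {3*k-2..<3*k+1}"
  proof -
    have "sum g {0..<4} + sum g {4..<3*k-2} = sum g {0..<3*k-2}"
      using k by (intro sum.atLeastLessThan_concat) auto
    moreover have "sum g {0..<3*k-2} + sum g {3*k-2..<3*k+1} = sum g {0..<3*k+1}"
      using k by (intro sum.atLeastLessThan_concat) auto
    ultimately show ?thesis by simp
  qed
  also have "sum g {0..<4} = 6" by (simp add: g_def numeral_eq_Suc)
  also have "sum g {4..<3*k-2} = sum (\<lambda>_. 1) {4..<3*k-2}"
    by (rule sum.cong) (auto simp: g_def)
  also have "sum g {3*k-2..<3*k+1} = 0"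
    using k by (intro sum.neutral) (auto simp: g_def)
  finally show ?thesis using k by simp
qed

lemma equil: assumes k: "2 \<le> (k::nat)"
  shows "max_equilibrium (3*k+1) (\<lambda>i. card (tS k i)) (tS k)"
  unfolding max_equilibrium_def
proof (intro conjI allI impI)
  show "profile (3*k+1) (\<lambda>i. card (tS k i)) (tS k)"
    unfolding profile_def strategy_def using tS_sub[OF k] by auto
next
  fix i T assume i: "i < 3*k+1" and T: "strategy (3*k+1) (\<lambda>i. card (tS k i)) i T"
  have T1: "T \<subseteq> {0..<3*k+1} - {i}" "card T = card (tS k i)" using T unfolding strategy_def by auto
  have c0: "cost_max (3*k+1) (tS k) i \<le> dp i + k" using S_cost[OF k i] .
  consider "1 \<le> i \<and> i \<le> 3" | "4 \<le> i \<and> i \<le> 3*k-3" | "i = 0 \<or> 3*k-3 < i" by linarith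
  then show "cost_max (3*k+1) (tS k) i \<le> cost_max (3*k+1) ((tS k)(i := T)) i"
  proof cases
    case 1
    then obtain v where v: "v < 3*k+1" "dp i + k \<le> gdist (3*k+1) ((tS k)(i := T)) i v"
      using dev_B[OF k _ _ T1] by blast
    show ?thesis using c0 v cost_ge[OF v(1), of "(tS k)(i := T)" i] by linarith
  next
    case 2
    then obtain v where v: "v < 3*k+1" "dp i + k \<le> gdist (3*k+1) ((tS k)(i := T)) i v"
      using dev_A[OF k _ _ T1] by blast
    show ?thesis using c0 v cost_ge[OF v(1), of "(tS k)(i := T)" i] by linarith
  next
    case 3
    have "tS k i = {}" using 3 k by (auto simp: tS_def)
    moreover have "finite T" using T1(1) finite_subset by blast
    ultimately have "T = tS k i" using T1(2) by simp
    then show ?thesis by simp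
  qed
qed

lemma diam: assumes k: "2 \<le> (k::nat)" shows "2*k \<le> diameter (3*k+1) (tS k)"
proof -
  define v where "v = 3*k-1"
  define u where "u = 3*k-2"
  have e1: "3*k-2 = 3*(k-1)+1" "3*k-1 = 3*(k-1)+2" using k by auto
  have m: "u mod 3 = 1" "v mod 3 = 2" unfolding u_def v_def e1 using mod3a mod3b by simp_all
  have pot: "\<forall>x y. adj (3*k+1) (tS k) x y \<longrightarrow> td x v \<le> td y v + 1"
    using adj_S[OF _ k] by blast
  have g: "min ((3*k+1)^2) (td u v - td v v) \<le> gdist (3*k+1) (tS k) u v" by (rule gdist_ge[OF pot])
  have "dp u = k" "dp v = k" using dp_leaf k unfolding u_def v_def by auto
  then have "td u v = 2*k" using m unfolding td_def legeq_def by auto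
  moreover have "2*k \<le> (3*k+1)^2" by (simp add: power2_eq_square)
  ultimately have "2*k \<le> gdist (3*k+1) (tS k) u v" using g td_self by simp
  also have "\<dots> \<le> diameter (3*k+1) (tS k)" using k unfolding u_def v_def by (intro diam_ge) auto
  finally show ?thesis .
qed

theorem mainTheorem3:
  shows "\<exists>c::real. c > 0 \<and>
    infinite {n::nat. \<exists>b::nat \<Rightarrow> nat. (\<forall>i<n. b i \<le> n - 1) \<and> (\<Sum>i<n. b i) = n - 1 \<and>
      (\<exists>S. max_equilibrium n b S \<and> real (diameter n S) \<ge> c * real n)}"
proof (intro exI conjI)
  show "(1/2::real) > 0" by simp
  let ?A = "{n::nat. \<exists>b::nat \<Rightarrow> nat. (\<forall>i<n. b i \<le> n - 1) \<and> (\<Sum>i<n. b i) = n - 1 \<and>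
      (\<exists>S. max_equilibrium n b S \<and> real (diameter n S) \<ge> 1/2 * real n)}"
  have sub: "(\<lambda>k::nat. 3*k+1) ` {2..} \<subseteq> ?A"
  proof
    fix n assume "n \<in> (\<lambda>k::nat. 3*k+1) ` {2..}"
    then obtain k where k: "2 \<le> k" "n = 3*k+1" by auto
    have b: "\<forall>i<n. card (tS k i) \<le> n - 1"
      using card_tS[OF k(1)] k by auto
    have s: "(\<Sum>i<n. card (tS k i)) = n - 1" using sum_tS[OF k(1)] k(2) by simp
    have d: "real (diameter n (tS k)) \<ge> 1/2 * real n"
    proof -
      have "2*k \<le> diameter n (tS k)" using diam[OF k(1)] k(2) by simp
      then have "real (2*k) \<le> real (diameter n (tS k))" by linarith
      moreover have "real k \<ge> 2" using k(1) by simp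
      ultimately show ?thesis using k(2) by simp
    qed
    have e: "max_equilibrium n (\<lambda>i. card (tS k i)) (tS k)" using equil[OF k(1)] k(2) by simp
    show "n \<in> ?A"
      unfolding mem_Collect_eq
      by (rule exI[of _ "\<lambda>i. card (tS k i)"], intro conjI, rule b, rule s, rule exI[of _ "tS k"], intro conjI, rule e, rule d)
  qed
  have "infinite ((\<lambda>k::nat. 3*k+1) ` {2..})"
  proof
    assume f: "finite ((\<lambda>k::nat. 3*k+1) ` {2..})"
    have inj: "inj_on (\<lambda>k::nat. 3*k+1) {2..}" by (auto simp: inj_on_def)
    have "finite {2::nat..}" using finite_imageD[OF f inj] .
    then show False using infinite_Ici by blast
  qed
  then show "infinite ?A" using sub finite_subset by blast
qed

end
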